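(* Let $E$ be a Hermite–Biehler entire function with no real zeros, and let $f \in \mathcal{H}^{\infty}(E)$ be a real entire function. Suppose that $f(\xi) = \lvert E(\xi)\rvert \, \lVert f/E\rVert_{\infty}$ for some $\xi \in \mathbb{R}$. Let $\alpha \in \mathbb{R}$ be such that $E(\xi) = e^{-i\alpha}\lvert E(\xi)\rvert$, and let $b_l$ and $b_r$ denote the simple zeros of $B_\alpha$ to the left and to the right of $\xi$, respectively. Then $$f(x) \geq \lVert f/E\rVert_{\infty}\, A_\alpha(x), \qquad b_l \leq x \leq b_r.$$
   Context: An entire function $E$ is Hermite–Biehler ($E \in HB$) if $\lvert E(\overline{z})\rvert < \lvert E(z)\rvert$ for all $z$ in the upper half-plane $\mathbb{C}_+$. For an entire function $g$, $g^{\#}(z) = \overline{g(\overline{z})}$; $g$ is real entire if it is real on the real axis. $\mathcal{H}^{\infty}(E)$ is the set of entire functions $f$ such that $f/E$ and $f^{\#}/E$ are bounded analytic functions on $\mathbb{C}_+$, with $\lVert f/E\rVert_\infty = \sup_{x\in\mathbb{R}} \lvert f(x)/E(x)\rvert$. For $\alpha\in\mathbb{R}$, write $E_\alpha = e^{i\alpha}E = A_\alpha + iB_\alpha$, where $A_\alpha = (E_\alpha + E_\alpha^{\#})/2$ and $B_\alpha = (E_\alpha - E_\alpha^{\#})/(2i)$ are real entire functions. *)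

theory Defs
  imports "HOL-Analysis.Analysis"
begin

definition entire :: "(complex \<Rightarrow> complex) \<Rightarrow> bool" where
  "entire g \<longleftrightarrow> g holomorphic_on UNIV"

definition sharp :: "(complex \<Rightarrow> complex) \<Rightarrow> complex \<Rightarrow> complex" where
  "sharp g z = cnj (g (cnj z))"

definition hermite_biehler :: "(complex \<Rightarrow> complex) \<Rightarrow> bool" where
  "hermite_biehler E \<longleftrightarrow> entire E \<and>
     (\<forall>z. Im z > 0 \<longrightarrow> cmod (E (cnj z)) < cmod (E z))"

definition real_entire :: "(complex \<Rightarrow> complex) \<Rightarrow> bool" where
  "real_entire g \<longleftrightarrow> entire g \<and> (\<forall>x::real. g (complex_of_real x) \<in> \<real>)"

definition Hinf :: "(complex \<Rightarrow> complex) \<Rightarrow> (complex \<Rightarrow> complex) set" where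
  "Hinf E = {f. entire f \<and>
     (\<lambda>z. f z / E z) analytic_on {z. Im z > 0} \<and>
     (\<lambda>z. sharp f z / E z) analytic_on {z. Im z > 0} \<and>
     bounded ((\<lambda>z. f z / E z) ` {z. Im z > 0}) \<and>
     bounded ((\<lambda>z. sharp f z / E z) ` {z. Im z > 0})}"

definition Hinf_norm :: "(complex \<Rightarrow> complex) \<Rightarrow> (complex \<Rightarrow> complex) \<Rightarrow> real" where
  "Hinf_norm E f = (SUP x::real. cmod (f (complex_of_real x) / E (complex_of_real x)))"

definition E_rot :: "(complex \<Rightarrow> complex) \<Rightarrow> real \<Rightarrow> complex \<Rightarrow> complex" where
  "E_rot E \<alpha> z = exp (\<i> * complex_of_real \<alpha>) * E z"

definition A_fun :: "(complex \<Rightarrow> complex) \<Rightarrow> real \<Rightarrow> complex \<Rightarrow> complex" where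
  "A_fun E \<alpha> z = (E_rot E \<alpha> z + sharp (E_rot E \<alpha>) z) / 2"

definition B_fun :: "(complex \<Rightarrow> complex) \<Rightarrow> real \<Rightarrow> complex \<Rightarrow> complex" where
  "B_fun E \<alpha> z = (E_rot E \<alpha> z - sharp (E_rot E \<alpha>) z) / (2 * \<i>)"

end

theory Submission imports Defs "HOL-Complex_Analysis.Complex_Analysis" begin

lemma den_ge1: "Im z \<ge> 0 \<Longrightarrow> e \<ge> 0 \<Longrightarrow> 1 \<le> norm (1 - \<i> * of_real e * z)"
proof -
  assume a: "Im z \<ge> 0" "e \<ge> 0"
  have "Re (1 - \<i> * of_real e * z) = 1 + e * Im z" by simp
  moreover have "1 + e * Im z \<ge> 1" using a by simp
  ultimately show ?thesis using abs_Re_le_cmod[of "1 - \<i> * of_real e * z"] by linarith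
qed

lemma den_ge2: "Im z \<ge> 0 \<Longrightarrow> e \<ge> 0 \<Longrightarrow> e * norm z \<le> norm (1 - \<i> * of_real e * z)"
proof -
  assume a: "Im z \<ge> 0" "e \<ge> 0"
  let ?w = "1 - \<i> * of_real e * z"
  have "(e * norm z)^2 = e^2 * (Re z ^2 + Im z^2)" by (simp add: power_mult_distrib cmod_power2)
  also have "\<dots> \<le> (1 + e * Im z)^2 + (e * Re z)^2" using a
    by (simp add: power2_eq_square algebra_simps)
  also have "\<dots> = (norm ?w)^2" by (simp only: cmod_power2) (simp add: power2_eq_square algebra_simps)
  finally show ?thesis using a by (metis power2_le_imp_le norm_ge_zero)
qed

lemma PL_pos:
  fixes g :: "complex \<Rightarrow> complex"
  assumes holg: "g holomorphic_on U" and opU: "open U" and sub: "{z. Im z \<ge> 0} \<subseteq> U"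
    and bC: "\<And>z. Im z > 0 \<Longrightarrow> norm (g z) \<le> C"
    and bB: "\<And>x::real. norm (g (of_real x)) \<le> B" and Bpos: "B > 0" and z0: "Im z0 > 0"
  shows "norm (g z0) \<le> B"
proof -
  have key: "norm (g z0) \<le> B * (1 + e * norm z0)" if e: "e > 0" for e
  proof -
    define h where "h z = g z / (1 - \<i> * of_real e * z)" for z
    define R where "R = max (norm z0 + 1) (max C B / (e * B) + 1)"
    define S where "S = {z. Im z > 0} \<inter> ball 0 R"
    have opS: "open S" unfolding S_def by (intro open_Int open_halfspace_Im_gt open_ball)
    have clS: "closure S \<subseteq> {z. Im z \<ge> 0} \<inter> cball 0 R"
      unfolding S_def
      by (intro closure_minimal closed_Int closed_halfspace_Im_ge closed_cball) auto
    have holh: "h holomorphic_on (U \<inter> {z. Im z \<ge> 0})"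
      unfolding h_def
      using den_ge1[of _ e] e
      by (intro holomorphic_intros holomorphic_on_subset[OF holg]) force+
    have hS: "h holomorphic_on S"
      by (rule holomorphic_on_subset[OF holh]) (use sub in \<open>auto simp: S_def\<close>)
    have hcont: "continuous_on (closure S) h"
    proof -
      have "h holomorphic_on (U \<inter> {z. 1 - \<i> * of_real e * z \<noteq> 0})"
        unfolding h_def by (intro holomorphic_intros holomorphic_on_subset[OF holg]) auto
      moreover have "closure S \<subseteq> U \<inter> {z. 1 - \<i> * of_real e * z \<noteq> 0}"
        using clS sub den_ge1[of _ e] e by fastforce
      ultimately show ?thesis using holomorphic_on_imp_continuous_on continuous_on_subset by blast
    qed
    have "norm (h z0) \<le> B"
    proof (rule maximum_modulus_frontier[where f=h and S=S])
      show "h holomorphic_on interior S" using hS opS by (simp add: interior_open)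
      show "continuous_on (closure S) h" by (rule hcont)
      show "bounded S" unfolding S_def by (intro bounded_Int) auto
      show "z0 \<in> S" using z0 by (auto simp: S_def R_def)
    next
      fix w assume w: "w \<in> frontier S"
      then have wc: "w \<in> closure S" and wS: "w \<notin> S" using opS
        by (auto simp: frontier_def interior_open)
      then have wi: "Im w \<ge> 0" "norm w \<le> R" using clS by auto
      show "norm (h w) \<le> B"
      proof (cases "Im w = 0")
        case True
        then have "w = of_real (Re w)" by (simp add: complex_eq_iff)
        then have "norm (g w) \<le> B" using bB by metis
        moreover have "1 \<le> norm (1 - \<i> * of_real e * w)" using den_ge1 wi e by simp
        ultimately show ?thesis unfolding h_def norm_divide
          using frac_le[of "norm (g w)" "norm (g w)" 1 "norm (1 - \<i> * of_real e * w)"] by simp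
      next
        case False
        then have "Im w > 0" using wi by simp
        with wS have nR: "norm w = R" using wi by (auto simp: S_def)
        have gw: "norm (g w) \<le> max C B" using bC \<open>Im w > 0\<close> by fastforce
        have d: "e * R \<le> norm (1 - \<i> * of_real e * w)" using den_ge2[of w e] wi e nR by simp
        have Rp0: "norm z0 + 1 > 0" by (simp add: add_nonneg_pos)
        have Rp: "R > 0" unfolding R_def using Rp0 by (simp add: less_max_iff_disj)
        have "max C B \<le> B * (e * R)"
        proof -
          have "max C B / (e * B) \<le> R" unfolding R_def by simp
          then show ?thesis using e Bpos by (simp add: divide_le_eq algebra_simps)
        qed
        have "norm (h w) = norm (g w) / norm (1 - \<i> * of_real e * w)" by (simp add: h_def norm_divide)
        also have "\<dots> \<le> max C B / (e * R)"
          using gw d e Rp Bpos by (intro frac_le) auto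
        also have "\<dots> \<le> B" using \<open>max C B \<le> B * (e * R)\<close> e Rp by (simp add: divide_le_eq)
        finally show ?thesis .
      qed
    qed
    moreover have dz: "norm (1 - \<i> * of_real e * z0) \<le> 1 + e * norm z0"
      using norm_triangle_ineq4[of 1 "\<i> * of_real e * z0"] e by (simp add: norm_mult)
    moreover have "g z0 = h z0 * (1 - \<i> * of_real e * z0)"
      using den_ge1[of z0 e] e z0 by (auto simp: h_def)
    ultimately show ?thesis
    proof -
      assume h1: "norm (h z0) \<le> B" and h2: "norm (1 - \<i> * of_real e * z0) \<le> 1 + e * norm z0"
        and h3: "g z0 = h z0 * (1 - \<i> * of_real e * z0)"
      have "norm (g z0) = norm (h z0) * norm (1 - \<i> * of_real e * z0)" using h3 by (simp add: norm_mult)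
      also have "\<dots> \<le> B * (1 + e * norm z0)"
        using h1 h2 Bpos by (intro mult_mono) auto
      finally show ?thesis .
    qed
  qed
  show ?thesis
  proof (rule ccontr)
    assume "\<not> ?thesis"
    then have d: "norm (g z0) - B > 0" by simp
    define e where "e = (norm (g z0) - B) / (2 * B * (norm z0 + 1))"
    have ep: "e > 0" using d Bpos unfolding e_def by (intro divide_pos_pos mult_pos_pos) (auto intro: add_nonneg_pos)
    have nz: "norm z0 + 1 > 0" by (simp add: add_nonneg_pos)
    have ee: "e * (2 * B * (norm z0 + 1)) = norm (g z0) - B" unfolding e_def using Bpos nz by simp
    have "B * (1 + e * norm z0) = B + e * norm z0 * B" by (simp add: algebra_simps)
    also have "\<dots> \<le> B + e * (norm z0 + 1) * B" using ep Bpos by (simp add: algebra_simps)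
    also have "\<dots> = B + (norm (g z0) - B) / 2" using ee by (simp add: algebra_simps)
    also have "\<dots> < B + (norm (g z0) - B)" using d by (simp add: field_simps)
    finally show False using key[OF ep] by simp
  qed
qed

lemma norm_sq_expand: "(norm (a + \<i> * of_real y * u))^2 = (norm a)^2 - 2 * y * Im (cnj a * u) + y^2 * (norm u)^2"
  by (simp only: cmod_power2) (simp add: power2_eq_square algebra_simps)

lemma deriv_sign:
  fixes G :: "complex \<Rightarrow> complex"
  assumes holG: "G holomorphic_on UNIV" and hb: "\<And>z. Im z > 0 \<Longrightarrow> norm (G (cnj z)) \<le> norm (G z)"
  shows "Im (cnj (G (of_real x)) * deriv G (of_real x)) \<le> 0"
proof -
  define g0 where "g0 = G (of_real x)"
  define D where "D = deriv G (of_real x)"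
  have "(G has_field_derivative D) (at (of_real x))"
    unfolding D_def using holG by (meson UNIV_I holomorphic_derivI open_UNIV)
  then have Q: "((\<lambda>h. (G (of_real x + h) - g0) / h) \<longlongrightarrow> D) (at 0)"
    by (simp add: DERIV_def g0_def)
  define y where "y n = inverse (real (Suc n))" for n
  have y0: "y \<longlonglongrightarrow> 0" unfolding y_def by (rule LIMSEQ_inverse_real_of_nat)
  have ypos: "y n > 0" for n unfolding y_def by simp
  have ynz: "y n \<noteq> 0" for n using ypos[of n] by simp
  have f1: "filterlim (\<lambda>n. \<i> * of_real (y n)) (at 0) sequentially"
  proof (rule filterlim_atI)
    show "((\<lambda>n. \<i> * complex_of_real (y n)) \<longlongrightarrow> 0) sequentially"
      using y0 by (auto intro!: tendsto_eq_intros)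
    show "\<forall>\<^sub>F n in sequentially. \<i> * complex_of_real (y n) \<noteq> 0" by (simp add: ynz)
  qed
  have f2: "filterlim (\<lambda>n. - (\<i> * of_real (y n))) (at 0) sequentially"
  proof (rule filterlim_atI)
    show "((\<lambda>n. - (\<i> * complex_of_real (y n))) \<longlongrightarrow> 0) sequentially"
      using y0 by (auto intro!: tendsto_eq_intros)
    show "\<forall>\<^sub>F n in sequentially. - (\<i> * complex_of_real (y n)) \<noteq> 0" by (simp add: ynz)
  qed
  define u where "u n = (G (of_real x + \<i> * of_real (y n)) - g0) / (\<i> * of_real (y n))" for n
  define v where "v n = (G (of_real x + - (\<i> * of_real (y n))) - g0) / (- (\<i> * of_real (y n)))" for n
  have ul: "u \<longlonglongrightarrow> D" unfolding u_def by (rule filterlim_compose[OF Q f1])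
  have vl: "v \<longlonglongrightarrow> D" unfolding v_def by (rule filterlim_compose[OF Q f2])
  have ineq: "2 * Im (cnj g0 * v n) + 2 * Im (cnj g0 * u n) \<le> y n * ((norm (u n))^2 - (norm (v n))^2)" for n
  proof -
    have yn: "y n \<noteq> 0" using ypos[of n] by simp
    have e1: "G (of_real x + \<i> * of_real (y n)) = g0 + \<i> * of_real (y n) * u n"
      unfolding u_def using yn by simp
    have e2: "G (of_real x + - (\<i> * of_real (y n))) = g0 + \<i> * of_real (- y n) * v n"
      unfolding v_def using yn by simp
    have "norm (G (cnj (of_real x + \<i> * of_real (y n)))) \<le> norm (G (of_real x + \<i> * of_real (y n)))"
      using hb[of "of_real x + \<i> * of_real (y n)"] ypos[of n] by simp
    moreover have "cnj (of_real x + \<i> * of_real (y n)) = of_real x + - (\<i> * of_real (y n))" by simp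
    ultimately have "norm (g0 + \<i> * of_real (- y n) * v n) \<le> norm (g0 + \<i> * of_real (y n) * u n)"
      using e1 e2 by simp
    then have "(norm (g0 + \<i> * of_real (- y n) * v n))^2 \<le> (norm (g0 + \<i> * of_real (y n) * u n))^2"
      by (simp add: power_mono)
    then have "y n * (2 * Im (cnj g0 * v n) + 2 * Im (cnj g0 * u n)) \<le> y n * (y n * ((norm (u n))^2 - (norm (v n))^2))"
      unfolding norm_sq_expand by (simp add: algebra_simps power2_eq_square)
    then show ?thesis using ypos[of n] by simp
  qed
  have "2 * Im (cnj g0 * D) + 2 * Im (cnj g0 * D) \<le> 0 * ((norm D)^2 - (norm D)^2)"
  proof (rule LIMSEQ_le)
    show "(\<lambda>n. 2 * Im (cnj g0 * v n) + 2 * Im (cnj g0 * u n)) \<longlonglongrightarrow> 2 * Im (cnj g0 * D) + 2 * Im (cnj g0 * D)"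
      by (intro tendsto_intros ul vl)
    show "(\<lambda>n. y n * ((norm (u n))^2 - (norm (v n))^2)) \<longlonglongrightarrow> 0 * ((norm D)^2 - (norm D)^2)"
      by (intro tendsto_intros ul vl y0)
    show "\<exists>N. \<forall>n\<ge>N. 2 * Im (cnj g0 * v n) + 2 * Im (cnj g0 * u n) \<le> y n * ((norm (u n))^2 - (norm (v n))^2)"
      using ineq by blast
  qed
  then show ?thesis unfolding g0_def D_def by simp
qed

lemma ratio_mono:
  fixes G :: "complex \<Rightarrow> complex"
  assumes holG: "G holomorphic_on UNIV"
    and sgn: "\<And>x::real. Im (cnj (G (of_real x)) * deriv G (of_real x)) \<le> 0"
    and uv: "u \<le> v" and nz: "\<And>x. u \<le> x \<Longrightarrow> x \<le> v \<Longrightarrow> Im (G (of_real x)) \<noteq> 0"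
  shows "Re (G (of_real u)) / Im (G (of_real u)) \<le> Re (G (of_real v)) / Im (G (of_real v))"
proof -
  define r where "r x = Re (G (of_real x))" for x
  define i where "i x = Im (G (of_real x))" for x
  have dG: "(G has_field_derivative deriv G (of_real x)) (at (of_real x))" for x :: real
    using holG by (meson UNIV_I holomorphic_derivI open_UNIV)
  have dr: "(r has_real_derivative Re (deriv G (of_real x))) (at x)" for x
    unfolding r_def by (rule has_field_derivative_Re[OF has_vector_derivative_real_field[OF dG]])
  have di: "(i has_real_derivative Im (deriv G (of_real x))) (at x)" for x
    unfolding i_def by (rule has_field_derivative_Im[OF has_vector_derivative_real_field[OF dG]])
  have dq: "((\<lambda>x. r x / i x) has_real_derivative
      (Re (deriv G (of_real x)) * i x - r x * Im (deriv G (of_real x))) / (i x * i x)) (at x)"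
    if "i x \<noteq> 0" for x
    by (rule DERIV_divide[OF dr di that])
  have "r u / i u \<le> r v / i v"
  proof (rule DERIV_nonneg_imp_increasing_open[OF uv])
    fix x assume x: "u < x" "x < v"
    then have ix: "i x \<noteq> 0" using nz unfolding i_def by simp
    have "Re (deriv G (of_real x)) * i x - r x * Im (deriv G (of_real x))
        = - Im (cnj (G (of_real x)) * deriv G (of_real x))"
      unfolding r_def i_def by (simp add: algebra_simps)
    also have "\<dots> \<ge> 0" using sgn[of x] by simp
    finally have "(Re (deriv G (of_real x)) * i x - r x * Im (deriv G (of_real x))) / (i x * i x) \<ge> 0"
      by simp
    then show "\<exists>y. ((\<lambda>x. r x / i x) has_real_derivative y) (at x) \<and> y \<ge> 0"
      using dq[OF ix] by blast
  next
    show "continuous_on {u..v} (\<lambda>x. r x / i x)"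
    proof (rule continuous_at_imp_continuous_on, safe)
      fix x assume "x \<in> {u..v}"
      then have "i x \<noteq> 0" using nz unfolding i_def by simp
      then show "isCont (\<lambda>x. r x / i x) x" using dq DERIV_isCont by blast
    qed
  qed
  then show ?thesis unfolding r_def i_def .
qed

lemma same_sign_left:
  fixes h :: "real \<Rightarrow> real"
  assumes "\<And>x. isCont h x" "p \<le> q" "\<And>t. p \<le> t \<Longrightarrow> t \<le> q \<Longrightarrow> h t \<noteq> 0" "h q > 0"
  shows "h p > 0"
proof (rule ccontr)
  assume "\<not> h p > 0"
  then have "h p \<le> 0" by simp
  then obtain x where "p \<le> x" "x \<le> q" "h x = 0"
    using IVT'[of h p 0 q] assms(1,2,4) by (auto intro: continuous_at_imp_continuous_on)
  then show False using assms(3) by blast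
qed

lemma same_sign_right:
  fixes h :: "real \<Rightarrow> real"
  assumes "\<And>x. isCont h x" "p \<le> q" "\<And>t. p \<le> t \<Longrightarrow> t \<le> q \<Longrightarrow> h t \<noteq> 0" "h p > 0"
  shows "h q > 0"
proof (rule ccontr)
  assume "\<not> h q > 0"
  then have "h q \<le> 0" by simp
  then obtain x where "p \<le> x" "x \<le> q" "h x = 0"
    using IVT2'[of h q 0 p] assms(1,2,4) by (auto intro: continuous_at_imp_continuous_on)
  then show False using assms(3) by blast
qed

lemma right_lim_le:
  fixes h :: "real \<Rightarrow> real"
  assumes "isCont h p" "p < m" "\<And>x. p < x \<Longrightarrow> x \<le> m \<Longrightarrow> h x \<le> 0"
  shows "h p \<le> 0"
proof -
  define xs where "xs n = p + (m - p) * inverse (real (Suc n))" for n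
  have "xs \<longlonglongrightarrow> p + (m - p) * 0" unfolding xs_def
    by (intro tendsto_intros LIMSEQ_inverse_real_of_nat)
  then have "xs \<longlonglongrightarrow> p" by simp
  then have l: "(\<lambda>n. h (xs n)) \<longlonglongrightarrow> h p" by (rule isCont_tendsto_compose[OF assms(1)])
  have "h (xs n) \<le> 0" for n
  proof (rule assms(3))
    have i: "0 < inverse (real (Suc n))" "inverse (real (Suc n)) \<le> 1" by (auto simp: inverse_le_1_iff)
    show "p < xs n" unfolding xs_def using assms(2) i by simp
    have "(m - p) * inverse (real (Suc n)) \<le> (m - p) * 1" using assms(2) i by (intro mult_left_mono) auto
    then show "xs n \<le> m" unfolding xs_def by simp
  qed
  then show ?thesis using LIMSEQ_le_const2[OF l] by blast
qed

lemma left_lim_le: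
  fixes h :: "real \<Rightarrow> real"
  assumes "isCont h p" "m < p" "\<And>x. m \<le> x \<Longrightarrow> x < p \<Longrightarrow> h x \<le> 0"
  shows "h p \<le> 0"
proof -
  define xs where "xs n = p - (p - m) * inverse (real (Suc n))" for n
  have "xs \<longlonglongrightarrow> p - (p - m) * 0" unfolding xs_def
    by (intro tendsto_intros LIMSEQ_inverse_real_of_nat)
  then have "xs \<longlonglongrightarrow> p" by simp
  then have l: "(\<lambda>n. h (xs n)) \<longlonglongrightarrow> h p" by (rule isCont_tendsto_compose[OF assms(1)])
  have "h (xs n) \<le> 0" for n
  proof (rule assms(3))
    have i: "0 < inverse (real (Suc n))" "inverse (real (Suc n)) \<le> 1" by (auto simp: inverse_le_1_iff)
    show "xs n < p" unfolding xs_def using assms(2) i by simp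
    have "(p - m) * inverse (real (Suc n)) \<le> (p - m) * 1" using assms(2) i by (intro mult_left_mono) auto
    then show "m \<le> xs n" unfolding xs_def by simp
  qed
  then show ?thesis using LIMSEQ_le_const2[OF l] by blast
qed

lemma trig_small:
  fixes s :: real assumes "0 < s" "s \<le> 1"
  shows "0 < sin s" "sin s \<le> s" "1 - cos s \<le> s" "cos s \<ge> 1/2" "cos s < 1"
proof -
  show "0 < sin s" using assms pi_gt3 by (intro sin_gt_zero) auto
  show "sin s \<le> s" using assms by (intro sin_x_le_x) auto
  have c: "cos s = 1 - 2 * sin (s/2) ^ 2" using cos_double_sin[of "s/2"] by simp
  have "\<bar>sin (s/2)\<bar> \<le> s/2" using abs_sin_x_le_abs_x[of "s/2"] assms by simp
  then have "sin (s/2) ^ 2 \<le> (s/2)^2" by (metis abs_le_square_iff abs_of_nonneg assms(1) half_gt_zero less_imp_le power2_abs)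
  then have q: "1 - cos s \<le> s^2/2" using c by (simp add: power2_eq_square)
  have "s^2 \<le> s" using assms by (simp add: power2_eq_square mult_le_cancel_left1)
  then show "1 - cos s \<le> s" using q assms by simp
  show "cos s \<ge> 1/2" using q \<open>s^2 \<le> s\<close> assms by simp
  have "0 < sin (s/2)" using assms pi_gt3 by (intro sin_gt_zero) auto
  then show "cos s < 1" using c by simp
qed

lemma core_right:
  fixes a b fr :: "real \<Rightarrow> real" and M \<xi> br :: real
  assumes ca: "\<And>x. isCont a x" and cb: "\<And>x. isCont b x" and cf: "\<And>x. isCont fr x"
    and Mpos: "M > 0" and a\<xi>: "a \<xi> > 0" and b\<xi>: "b \<xi> = 0" and f\<xi>: "fr \<xi> = M * a \<xi>"
    and \<xi>br: "\<xi> < br" and bnz: "\<And>t. \<xi> < t \<Longrightarrow> t < br \<Longrightarrow> b t \<noteq> 0"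
    and monoE: "\<And>u v. u \<le> v \<Longrightarrow> (\<And>x. u \<le> x \<Longrightarrow> x \<le> v \<Longrightarrow> b x \<noteq> 0) \<Longrightarrow> a u / b u \<le> a v / b v"
    and monoG: "\<And>\<beta> l u v. l > 1 \<Longrightarrow> u \<le> v \<Longrightarrow>
        (\<And>x. u \<le> x \<Longrightarrow> x \<le> v \<Longrightarrow> sin \<beta> * a x + cos \<beta> * b x \<noteq> 0) \<Longrightarrow>
        (l * M * (cos \<beta> * a u - sin \<beta> * b u) - fr u) / (l * M * (sin \<beta> * a u + cos \<beta> * b u))
        \<le> (l * M * (cos \<beta> * a v - sin \<beta> * b v) - fr v) / (l * M * (sin \<beta> * a v + cos \<beta> * b v))"
    and x: "\<xi> \<le> x" "x \<le> br"
  shows "M * a x \<le> fr x"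
proof -
  have bneg: "b t < 0" if t: "\<xi> < t" "t < br" for t
  proof (rule ccontr)
    assume "\<not> b t < 0"
    then have bt: "b t > 0" using bnz[OF t] by simp
    define K where "K = a t / b t"
    have "(\<lambda>y. a y - K * b y) \<xi> \<le> 0"
    proof (rule right_lim_le[OF _ t(1)])
      show "isCont (\<lambda>y. a y - K * b y) \<xi>" using ca cb by (intro continuous_intros) auto
    next
      fix y assume y: "\<xi> < y" "y \<le> t"
      have nz: "\<And>z. y \<le> z \<Longrightarrow> z \<le> t \<Longrightarrow> b z \<noteq> 0" using bnz y t by force
      have hby: "b y > 0" by (rule same_sign_left[OF cb y(2) nz bt])
      have "a y / b y \<le> K" unfolding K_def by (rule monoE[OF y(2) nz])
      then show "a y - K * b y \<le> 0" using hby by (simp add: divide_le_eq)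
    qed
    then show False using a\<xi> b\<xi> by simp
  qed
  have main: "M * a x0 \<le> fr x0" if x0: "\<xi> < x0" "x0 < br" for x0
  proof (rule ccontr)
    assume "\<not> ?thesis"
    define d where "d = M * a x0 - fr x0"
    have dpos: "d > 0" using \<open>\<not> M * a x0 \<le> fr x0\<close> unfolding d_def by simp
    have "\<forall>\<^sub>F y in at \<xi>. 0 < a y" using ca[of \<xi>] a\<xi> by (simp add: isCont_def order_tendstoD(1))
    then obtain \<delta> where \<delta>: "\<delta> > 0" "\<And>y. y \<noteq> \<xi> \<Longrightarrow> dist y \<xi> < \<delta> \<Longrightarrow> 0 < a y"
      unfolding eventually_at by auto
    have apos: "0 < a y" if "\<xi> \<le> y" "y \<le> \<xi> + \<delta>/2" for y
      using \<delta> that a\<xi> by (cases "y = \<xi>") (auto simp: dist_real_def)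
    define c1 where "c1 = min (\<xi> + \<delta>/2) x0"
    have c1: "\<xi> < c1" "c1 \<le> x0" using \<delta> x0 by (auto simp: c1_def)
    have contS: "continuous_on {c1..x0} h" if "\<And>x. isCont h x" for h :: "real \<Rightarrow> real"
      using that by (intro continuous_at_imp_continuous_on) auto
    obtain p where p: "p \<in> {c1..x0}" "\<And>y. y \<in> {c1..x0} \<Longrightarrow> - b p \<le> - b y"
      using continuous_attains_inf[of "{c1..x0}" "\<lambda>y. - b y"] c1 contS[of "\<lambda>y. - b y"] cb
      by (auto intro: continuous_intros)
    obtain q where q: "q \<in> {c1..x0}" "\<And>y. y \<in> {c1..x0} \<Longrightarrow> \<bar>a y\<bar> \<le> \<bar>a q\<bar>"
      using continuous_attains_sup[of "{c1..x0}" "\<lambda>y. \<bar>a y\<bar>"] c1 contS[of "\<lambda>y. \<bar>a y\<bar>"] ca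
      by (auto intro: continuous_intros)
    define m0 where "m0 = - b p"
    define K0 where "K0 = \<bar>a q\<bar>"
    have m0: "m0 > 0" unfolding m0_def using bneg[of p] p c1 x0 by auto
    have K0: "K0 \<ge> 0" unfolding K0_def by simp
    define P where "P = \<bar>a x0\<bar> + 2 * \<bar>b x0\<bar> + 1"
    have P: "P > 0" unfolding P_def by (simp add: add_nonneg_pos)
    define s where "s = min 1 (min (m0 / (4 * (K0 + 1))) (d / (2 * M * P)))"
    have s: "0 < s" "s \<le> 1" "s \<le> m0 / (4 * (K0 + 1))" "s \<le> d / (2 * M * P)"
      unfolding s_def using m0 K0 dpos Mpos P by (auto simp: add_nonneg_pos)
    note tr = trig_small[OF s(1) s(2)]
    define l where "l = (1 + 1 / cos s) / 2"
    have cpos: "cos s > 0" using tr(4) by simp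
    have l1: "l > 1" unfolding l_def using tr(5) cpos by (simp add: field_simps)
    have l2: "l \<le> 2" unfolding l_def using tr(4) cpos by (simp add: field_simps)
    have lc: "l * cos s = (cos s + 1) / 2" unfolding l_def using cpos by (simp add: field_simps)
    define \<beta> where "\<beta> = - s"
    have sb: "sin \<beta> = - sin s" "cos \<beta> = cos s" unfolding \<beta>_def by simp_all
    have imneg: "sin \<beta> * a y + cos \<beta> * b y < 0" if y: "\<xi> \<le> y" "y \<le> x0" for y
    proof (cases "y \<le> c1")
      case True
      then have "0 < a y" using apos[of y] y c1_def by simp
      moreover have "b y \<le> 0" using bneg[of y] y x0 b\<xi> by (cases "y = \<xi>") auto
      ultimately have "sin s * a y > 0" "cos s * b y \<le> 0" using tr(1) cpos
        by (simp_all add: mult_nonneg_nonpos)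
      then show ?thesis unfolding sb by linarith
    next
      case False
      then have yS: "y \<in> {c1..x0}" using y by simp
      have hby: "b y \<le> - m0" using p(2)[OF yS] unfolding m0_def by simp
      have ay: "\<bar>a y\<bar> \<le> K0" using q(2)[OF yS] unfolding K0_def by simp
      have "- a y \<le> K0" using ay by linarith
      then have "sin s * (- a y) \<le> sin s * K0" using tr(1) by (intro mult_left_mono) auto
      then have "- sin s * a y \<le> sin s * K0" by simp
      also have "\<dots> \<le> s * K0" using tr(2) K0 by (simp add: mult_right_mono)
      also have "\<dots> \<le> m0 / (4 * (K0 + 1)) * K0" using s(3) K0 by (rule mult_right_mono)
      also have "\<dots> < m0 / 2"
      proof -
        have "m0 / (4 * (K0 + 1)) * K0 = (m0 / 4) * (K0 / (K0 + 1))" by (simp add: field_simps)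
        also have "\<dots> \<le> (m0 / 4) * 1" using K0 m0 by (intro mult_left_mono) auto
        finally have "m0 / (4 * (K0 + 1)) * K0 \<le> m0 / 4" by simp
        then show ?thesis using m0 by linarith
      qed
      also have "\<dots> \<le> cos s * m0" using tr(4) m0 by (simp add: mult_right_mono)
      finally have "- sin s * a y < cos s * m0" .
      moreover have "cos s * b y \<le> cos s * (- m0)" using hby cpos by (intro mult_left_mono) auto
      ultimately show ?thesis unfolding sb by linarith
    qed
    have mono: "(l * M * (cos \<beta> * a \<xi> - sin \<beta> * b \<xi>) - fr \<xi>) / (l * M * (sin \<beta> * a \<xi> + cos \<beta> * b \<xi>))
        \<le> (l * M * (cos \<beta> * a x0 - sin \<beta> * b x0) - fr x0) / (l * M * (sin \<beta> * a x0 + cos \<beta> * b x0))"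
      by (rule monoG[OF l1]) (use x0 imneg in \<open>force+\<close>)
    have lM: "l * M > 0" using l1 Mpos by simp
    have den\<xi>: "l * M * (sin \<beta> * a \<xi> + cos \<beta> * b \<xi>) < 0"
      using imneg[of \<xi>] x0 lM by (simp add: mult_pos_neg)
    have denx: "l * M * (sin \<beta> * a x0 + cos \<beta> * b x0) < 0"
      using imneg[of x0] x0 lM by (simp add: mult_pos_neg)
    have num\<xi>: "l * M * (cos \<beta> * a \<xi> - sin \<beta> * b \<xi>) - fr \<xi> < 0"
    proof -
      have "l * M * (cos \<beta> * a \<xi> - sin \<beta> * b \<xi>) - fr \<xi> = M * a \<xi> * (l * cos s - 1)"
        unfolding sb b\<xi> f\<xi> by (simp add: algebra_simps)
      also have "\<dots> < 0" unfolding lc using tr(5) Mpos a\<xi> by (simp add: mult_pos_neg)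
      finally show ?thesis .
    qed
    have numx: "l * M * (cos \<beta> * a x0 - sin \<beta> * b x0) - fr x0 > 0"
    proof -
      have eq: "l * M * (cos \<beta> * a x0 - sin \<beta> * b x0) - fr x0
          = d + M * (a x0 * (l * cos s - 1) + l * sin s * b x0)"
        unfolding sb d_def by (simp add: algebra_simps)
      have t1: "\<bar>a x0 * (l * cos s - 1)\<bar> \<le> \<bar>a x0\<bar> * s"
      proof -
        have "\<bar>l * cos s - 1\<bar> \<le> s" unfolding lc using tr(3) tr(5) by simp
        then show ?thesis by (simp add: abs_mult mult_left_mono)
      qed
      have t2: "\<bar>l * sin s * b x0\<bar> \<le> 2 * s * \<bar>b x0\<bar>"
      proof -
        have "l * sin s \<le> 2 * s" using l1 l2 tr(1) tr(2) by (intro mult_mono) auto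
        moreover have "l * sin s \<ge> 0" using l1 tr(1) by simp
        ultimately have "\<bar>l * sin s\<bar> \<le> 2 * s" by simp
        then show ?thesis by (simp add: abs_mult mult_right_mono)
      qed
      have "\<bar>a x0 * (l * cos s - 1) + l * sin s * b x0\<bar> \<le> s * P"
      proof -
        have "s * P = \<bar>a x0\<bar> * s + 2 * s * \<bar>b x0\<bar> + s" unfolding P_def by (simp add: algebra_simps)
        then show ?thesis using t1 t2 s(1) abs_triangle_ineq[of "a x0 * (l * cos s - 1)" "l * sin s * b x0"]
          by linarith
      qed
      also have "\<dots> \<le> d / (2 * M)"
      proof -
        have "s * P \<le> d / (2 * M * P) * P" using s(4) P by (intro mult_right_mono) auto
        also have "\<dots> = d / (2 * M)" using P by simp
        finally show ?thesis .
      qed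
      finally have "M * \<bar>a x0 * (l * cos s - 1) + l * sin s * b x0\<bar> \<le> M * (d / (2 * M))"
        using Mpos by (intro mult_left_mono) auto
      also have "\<dots> = d / 2" using Mpos by simp
      finally have fin: "M * \<bar>a x0 * (l * cos s - 1) + l * sin s * b x0\<bar> \<le> d / 2" .
      have "\<bar>M * (a x0 * (l * cos s - 1) + l * sin s * b x0)\<bar> = M * \<bar>a x0 * (l * cos s - 1) + l * sin s * b x0\<bar>"
        using Mpos by (simp add: abs_mult)
      then have "M * (a x0 * (l * cos s - 1) + l * sin s * b x0) \<ge> - (d / 2)"
        using fin abs_ge_minus_self[of "M * (a x0 * (l * cos s - 1) + l * sin s * b x0)"] by linarith
      then show ?thesis unfolding eq using dpos by linarith
    qed
    have "0 < (l * M * (cos \<beta> * a \<xi> - sin \<beta> * b \<xi>) - fr \<xi>) / (l * M * (sin \<beta> * a \<xi> + cos \<beta> * b \<xi>))"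
      using num\<xi> den\<xi> by (simp add: divide_neg_neg)
    moreover have "(l * M * (cos \<beta> * a x0 - sin \<beta> * b x0) - fr x0) / (l * M * (sin \<beta> * a x0 + cos \<beta> * b x0)) < 0"
      using numx denx by (simp add: divide_pos_neg)
    ultimately show False using mono by linarith
  qed
  show ?thesis
  proof (cases "x = \<xi>")
    case True then show ?thesis using f\<xi> by simp
  next
    case False
    show ?thesis
    proof (cases "x = br")
      case False
      then show ?thesis using main x \<open>x \<noteq> \<xi>\<close> by simp
    next
      case True
      have "(\<lambda>y. M * a y - fr y) br \<le> 0"
      proof (rule left_lim_le[OF _ \<xi>br])
        show "isCont (\<lambda>y. M * a y - fr y) br" using ca cf by (intro continuous_intros) auto
        fix y assume "\<xi> \<le> y" "y < br"
        then show "M * a y - fr y \<le> 0" using main[of y] f\<xi> by (cases "y = \<xi>") auto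
      qed
      then show ?thesis using True by simp
    qed
  qed
qed

lemma core_left:
  fixes a b fr :: "real \<Rightarrow> real" and M \<xi> bl :: real
  assumes ca: "\<And>x. isCont a x" and cb: "\<And>x. isCont b x" and cf: "\<And>x. isCont fr x"
    and Mpos: "M > 0" and a\<xi>: "a \<xi> > 0" and b\<xi>: "b \<xi> = 0" and f\<xi>: "fr \<xi> = M * a \<xi>"
    and bl\<xi>: "bl < \<xi>" and bnz: "\<And>t. bl < t \<Longrightarrow> t < \<xi> \<Longrightarrow> b t \<noteq> 0"
    and monoE: "\<And>u v. u \<le> v \<Longrightarrow> (\<And>x. u \<le> x \<Longrightarrow> x \<le> v \<Longrightarrow> b x \<noteq> 0) \<Longrightarrow> a u / b u \<le> a v / b v"
    and monoG: "\<And>\<beta> l u v. l > 1 \<Longrightarrow> u \<le> v \<Longrightarrow>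
        (\<And>x. u \<le> x \<Longrightarrow> x \<le> v \<Longrightarrow> sin \<beta> * a x + cos \<beta> * b x \<noteq> 0) \<Longrightarrow>
        (l * M * (cos \<beta> * a u - sin \<beta> * b u) - fr u) / (l * M * (sin \<beta> * a u + cos \<beta> * b u))
        \<le> (l * M * (cos \<beta> * a v - sin \<beta> * b v) - fr v) / (l * M * (sin \<beta> * a v + cos \<beta> * b v))"
    and x: "bl \<le> x" "x \<le> \<xi>"
  shows "M * a x \<le> fr x"
proof -
  define a' where "a' y = a (- y)" for y
  define b' where "b' y = - b (- y)" for y
  define f' where "f' y = fr (- y)" for y
  have "M * a' (- x) \<le> f' (- x)"
  proof (rule core_right[where \<xi> = "- \<xi>" and br = "- bl" and b = b' and a = a' and fr = f'])
    show "\<And>y. isCont a' y" unfolding a'_def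
      by (rule continuous_intros isCont_o2[where f=uminus] | use ca in blast)+
    show "\<And>y. isCont b' y" unfolding b'_def
      by (rule continuous_intros isCont_o2[where f=uminus] | use cb in blast)+
    show "\<And>y. isCont f' y" unfolding f'_def
      by (rule continuous_intros isCont_o2[where f=uminus] | use cf in blast)+
    show "0 < M" by (rule Mpos)
    show "0 < a' (- \<xi>)" using a\<xi> by (simp add: a'_def)
    show "b' (- \<xi>) = 0" using b\<xi> by (simp add: b'_def)
    show "f' (- \<xi>) = M * a' (- \<xi>)" using f\<xi> by (simp add: a'_def f'_def)
    show "- \<xi> < - bl" using bl\<xi> by simp
    show "\<And>t. - \<xi> < t \<Longrightarrow> t < - bl \<Longrightarrow> b' t \<noteq> 0" unfolding b'_def using bnz by force
    show "- \<xi> \<le> - x" "- x \<le> - bl" using x by auto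
  next
    fix u v assume uv: "u \<le> v" and nz: "\<And>y. u \<le> y \<Longrightarrow> y \<le> v \<Longrightarrow> b' y \<noteq> 0"
    have "a (- v) / b (- v) \<le> a (- u) / b (- u)"
    proof (rule monoE)
      show "- v \<le> - u" using uv by simp
      fix y assume "- v \<le> y" "y \<le> - u"
      then show "b y \<noteq> 0" using nz[of "- y"] unfolding b'_def by simp
    qed
    then show "a' u / b' u \<le> a' v / b' v" unfolding a'_def b'_def by simp
  next
    fix \<beta> l u v :: real
    assume l: "1 < l" and uv: "u \<le> v"
      and nz: "\<And>y. u \<le> y \<Longrightarrow> y \<le> v \<Longrightarrow> sin \<beta> * a' y + cos \<beta> * b' y \<noteq> 0"
    define R where "R y = (l * M * (cos (- \<beta>) * a y - sin (- \<beta>) * b y) - fr y) / (l * M * (sin (- \<beta>) * a y + cos (- \<beta>) * b y))" for y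
    have "R (- v) \<le> R (- u)" unfolding R_def
    proof (rule monoG[OF l])
      show "- v \<le> - u" using uv by simp
      fix y assume "- v \<le> y" "y \<le> - u"
      then have "sin \<beta> * a' (- y) + cos \<beta> * b' (- y) \<noteq> 0" using nz[of "- y"] by simp
      then show "sin (- \<beta>) * a y + cos (- \<beta>) * b y \<noteq> 0" unfolding a'_def b'_def by simp
    qed
    moreover have "(l * M * (cos \<beta> * a' y - sin \<beta> * b' y) - f' y) / (l * M * (sin \<beta> * a' y + cos \<beta> * b' y)) = - R (- y)" for y
    proof -
      have e1: "l * M * (sin \<beta> * a' y + cos \<beta> * b' y) = - (l * M * (sin (- \<beta>) * a (- y) + cos (- \<beta>) * b (- y)))"
        unfolding a'_def b'_def sin_minus cos_minus by (simp add: algebra_simps)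
      have e2: "l * M * (cos \<beta> * a' y - sin \<beta> * b' y) - f' y = l * M * (cos (- \<beta>) * a (- y) - sin (- \<beta>) * b (- y)) - fr (- y)"
        unfolding a'_def b'_def f'_def sin_minus cos_minus by (simp add: algebra_simps)
      show ?thesis unfolding R_def by (simp only: e1 e2 minus_divide_right)
    qed
    ultimately show "(l * M * (cos \<beta> * a' u - sin \<beta> * b' u) - f' u) / (l * M * (sin \<beta> * a' u + cos \<beta> * b' u))
        \<le> (l * M * (cos \<beta> * a' v - sin \<beta> * b' v) - f' v) / (l * M * (sin \<beta> * a' v + cos \<beta> * b' v))"
      by simp
  qed
  then show ?thesis unfolding a'_def f'_def by simp
qed

lemma sharp_holo:
  assumes "g holomorphic_on UNIV"
  shows "(\<lambda>z. cnj (g (cnj z))) holomorphic_on UNIV"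
  unfolding holomorphic_on_def field_differentiable_def
proof
  fix z :: complex
  have "(g has_field_derivative deriv g (cnj z)) (at (cnj z))"
    using assms by (meson UNIV_I holomorphic_derivI open_UNIV)
  then have "((cnj \<circ> g \<circ> cnj) has_field_derivative cnj (deriv g (cnj z))) (at z)"
    by (rule has_field_derivative_cnj_cnj)
  then show "\<exists>f'. ((\<lambda>z. cnj (g (cnj z))) has_field_derivative f') (at z within UNIV)"
    by (auto simp: o_def)
qed

lemma cont_re_im:
  assumes "G holomorphic_on UNIV"
  shows "isCont (\<lambda>x. Re (G (of_real x))) x" "isCont (\<lambda>x. Im (G (of_real x))) x"
proof -
  have dG: "(G has_field_derivative deriv G (of_real x)) (at (of_real x))"
    using assms by (meson UNIV_I holomorphic_derivI open_UNIV)
  show "isCont (\<lambda>x. Re (G (of_real x))) x"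
    by (rule DERIV_isCont[OF has_field_derivative_Re[OF has_vector_derivative_real_field[OF dG]]])
  show "isCont (\<lambda>x. Im (G (of_real x))) x"
    by (rule DERIV_isCont[OF has_field_derivative_Im[OF has_vector_derivative_real_field[OF dG]]])
qed

lemma bound_boundary:
  fixes g :: "complex \<Rightarrow> complex"
  assumes "isCont g (of_real x)" "\<And>z. Im z > 0 \<Longrightarrow> norm (g z) \<le> K"
  shows "norm (g (of_real x)) \<le> K"
proof -
  define zs where "zs n = of_real x + \<i> * of_real (inverse (real (Suc n)))" for n
  have "zs \<longlonglongrightarrow> of_real x + \<i> * of_real 0" unfolding zs_def
    by (intro tendsto_intros LIMSEQ_inverse_real_of_nat)
  then have "zs \<longlonglongrightarrow> of_real x" by simp
  then have "(\<lambda>n. norm (g (zs n))) \<longlonglongrightarrow> norm (g (of_real x))"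
    by (intro tendsto_norm isCont_tendsto_compose[OF assms(1)])
  moreover have "norm (g (zs n)) \<le> K" for n by (rule assms(2)) (simp add: zs_def)
  ultimately show ?thesis using LIMSEQ_le_const2 by blast
qed

lemma sharp_real: "sharp g (of_real x) = cnj (g (of_real x))"
  by (simp add: sharp_def)

lemma A_real: "A_fun E \<alpha> (of_real x) = of_real (Re (E_rot E \<alpha> (of_real x)))"
  unfolding A_fun_def sharp_real by (simp add: complex_add_cnj)

lemma B_real: "B_fun E \<alpha> (of_real x) = of_real (Im (E_rot E \<alpha> (of_real x)))"
  unfolding B_fun_def sharp_real by (simp add: complex_diff_cnj field_simps)

theorem theorem1:
  fixes E f :: "complex \<Rightarrow> complex" and \<xi> \<alpha> b\<^sub>l b\<^sub>r :: real
  assumes HB: "hermite_biehler E"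
    and no_real_zeros: "\<forall>x::real. E (complex_of_real x) \<noteq> 0"
    and f_real: "real_entire f"
    and f_Hinf: "f \<in> Hinf E"
    and f_xi: "f (complex_of_real \<xi>) = complex_of_real (cmod (E (complex_of_real \<xi>)) * Hinf_norm E f)"
    and alpha: "E (complex_of_real \<xi>) = exp (- \<i> * complex_of_real \<alpha>) * complex_of_real (cmod (E (complex_of_real \<xi>)))"
    and bl: "b\<^sub>l < \<xi>" "B_fun E \<alpha> (complex_of_real b\<^sub>l) = 0"
            "\<forall>t. b\<^sub>l < t \<and> t < \<xi> \<longrightarrow> B_fun E \<alpha> (complex_of_real t) \<noteq> 0"
    and br: "\<xi> < b\<^sub>r" "B_fun E \<alpha> (complex_of_real b\<^sub>r) = 0"
            "\<forall>t. \<xi> < t \<and> t < b\<^sub>r \<longrightarrow> B_fun E \<alpha> (complex_of_real t) \<noteq> 0"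
  shows "\<forall>x. b\<^sub>l \<le> x \<and> x \<le> b\<^sub>r \<longrightarrow>
           Re (f (complex_of_real x)) \<ge> Hinf_norm E f * Re (A_fun E \<alpha> (complex_of_real x))"
proof -
  define M where "M = Hinf_norm E f"
  define Ea where "Ea = E_rot E \<alpha>"
  have holE: "E holomorphic_on UNIV" using HB by (simp add: hermite_biehler_def entire_def)
  have holf: "f holomorphic_on UNIV" using f_real by (simp add: real_entire_def entire_def)
  have holEa: "Ea holomorphic_on UNIV" unfolding Ea_def E_rot_def by (intro holomorphic_intros holE)
  have nEa: "norm (Ea z) = norm (E z)" for z unfolding Ea_def E_rot_def by (simp add: norm_mult)
  have hbE: "norm (E (cnj z)) < norm (E z)" if "Im z > 0" for z
    using HB that by (simp add: hermite_biehler_def)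
  have Enz: "E z \<noteq> 0" if "Im z \<ge> 0" for z
  proof (cases "Im z = 0")
    case True
    then have "z = of_real (Re z)" by (simp add: complex_eq_iff)
    then show ?thesis using no_real_zeros by metis
  next
    case False
    then have "Im z > 0" using that by simp
    then show ?thesis using hbE[of z] by auto
  qed
  have fIm: "Im (f (of_real x)) = 0" for x
    using f_real by (simp add: real_entire_def complex_is_Real_iff)
  obtain K where K: "\<And>z. Im z > 0 \<Longrightarrow> norm (f z / E z) \<le> K"
    using f_Hinf unfolding Hinf_def bounded_iff by blast
  obtain K2 where K2: "\<And>z. Im z > 0 \<Longrightarrow> norm (sharp f z / E z) \<le> K2"
    using f_Hinf unfolding Hinf_def bounded_iff by blast
  have openU: "open {z. E z \<noteq> 0}"
    by (rule open_Collect_neq) (auto intro: holomorphic_on_imp_continuous_on holE)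
  have holfE: "(\<lambda>z. f z / E z) holomorphic_on {z. E z \<noteq> 0}"
    by (intro holomorphic_intros holomorphic_on_subset[OF holf] holomorphic_on_subset[OF holE]) auto
  have contfE: "isCont (\<lambda>z. f z / E z) (of_real x)" for x
  proof -
    have "continuous_on {z. E z \<noteq> 0} (\<lambda>z. f z / E z)" by (rule holomorphic_on_imp_continuous_on[OF holfE])
    then show ?thesis using openU no_real_zeros continuous_on_eq_continuous_at by blast
  qed
  have realK: "norm (f (of_real x) / E (of_real x)) \<le> K" for x
    by (rule bound_boundary[OF contfE]) (rule K)
  have bdd: "bdd_above (range (\<lambda>x::real. cmod (f (of_real x) / E (of_real x))))"
    using realK by (auto intro!: bdd_aboveI[of _ K])
  have realM: "norm (f (of_real x) / E (of_real x)) \<le> M" for x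
    unfolding M_def Hinf_norm_def by (rule cSUP_upper[OF UNIV_I bdd])
  have M0: "M \<ge> 0" using realM[of 0] by (meson norm_ge_zero order_trans)
  have realM': "norm (f (of_real x)) \<le> M * norm (E (of_real x))" for x
    using realM[of x] no_real_zeros by (simp add: norm_divide divide_le_eq)
  show ?thesis
  proof (cases "M = 0")
    case True
    then have "f (of_real x) = 0" for x using realM'[of x] by simp
    then show ?thesis using True unfolding M_def by simp
  next
    case False
    then have Mpos: "M > 0" using M0 by simp
    define a where "a x = Re (Ea (of_real x))" for x
    define b where "b x = Im (Ea (of_real x))" for x
    define fr where "fr x = Re (f (of_real x))" for x
    have ca: "\<And>x. isCont a x" unfolding a_def by (rule cont_re_im(1)[OF holEa])
    have cb: "\<And>x. isCont b x" unfolding b_def by (rule cont_re_im(2)[OF holEa])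
    have cf: "\<And>x. isCont fr x" unfolding fr_def by (rule cont_re_im(1)[OF holf])
    have subU: "{z. Im z \<ge> 0} \<subseteq> {z. E z \<noteq> 0}" using Enz by auto
    have fbound: "norm (f z) \<le> M * norm (E z)" if "Im z \<ge> 0" for z
    proof (cases "Im z = 0")
      case True
      then have "z = of_real (Re z)" by (simp add: complex_eq_iff)
      then show ?thesis using realM' by metis
    next
      case False
      then have zp: "Im z > 0" using that by simp
      have "norm (f z / E z) \<le> M"
        by (rule PL_pos[OF holfE openU subU K realM Mpos zp])
      then show ?thesis using Enz[of z] zp by (simp add: norm_divide divide_le_eq)
    qed
    define r where "r = cmod (E (of_real \<xi>))"
    have rpos: "r > 0" unfolding r_def using no_real_zeros by simp
    have alpha': "E (of_real \<xi>) = exp (- \<i> * of_real \<alpha>) * of_real r" using alpha unfolding r_def .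
    have Ea\<xi>: "Ea (of_real \<xi>) = of_real r"
    proof -
      have "Ea (of_real \<xi>) = exp (\<i> * of_real \<alpha>) * (exp (- \<i> * of_real \<alpha>) * of_real r)"
        unfolding Ea_def E_rot_def using alpha' by simp
      also have "\<dots> = (exp (\<i> * of_real \<alpha>) * exp (- \<i> * of_real \<alpha>)) * of_real r" by (simp add: mult.assoc)
      also have "exp (\<i> * of_real \<alpha>) * exp (- \<i> * of_real \<alpha>) = 1" by (simp flip: exp_add)
      finally show ?thesis by simp
    qed
    have a\<xi>: "a \<xi> > 0" "a \<xi> = r" unfolding a_def using Ea\<xi> rpos by simp_all
    have b\<xi>: "b \<xi> = 0" unfolding b_def using Ea\<xi> by simp
    have f\<xi>: "fr \<xi> = M * a \<xi>" unfolding fr_def using f_xi a\<xi>(2) unfolding M_def r_def by simp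
    have bB: "B_fun E \<alpha> (of_real t) \<noteq> 0 \<longleftrightarrow> b t \<noteq> 0" for t
      unfolding B_real b_def Ea_def by simp
    have hbEa: "norm (Ea (cnj z)) \<le> norm (Ea z)" if "Im z > 0" for z
      using hbE[OF that] nEa by (simp add: less_imp_le)
    have monoE: "a u / b u \<le> a v / b v"
      if uv: "u \<le> v" and nz: "\<And>x. u \<le> x \<Longrightarrow> x \<le> v \<Longrightarrow> b x \<noteq> 0" for u v
      unfolding a_def b_def
      by (rule ratio_mono[OF holEa deriv_sign[OF holEa hbEa] uv]) (use nz in \<open>auto simp: b_def\<close>)
    have K2pos: "K2 \<ge> 0" using K2[of \<i>] by (simp add: order_trans[OF norm_ge_zero])
    have monoG: "(l * M * (cos \<beta> * a u - sin \<beta> * b u) - fr u) / (l * M * (sin \<beta> * a u + cos \<beta> * b u))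
        \<le> (l * M * (cos \<beta> * a v - sin \<beta> * b v) - fr v) / (l * M * (sin \<beta> * a v + cos \<beta> * b v))"
      if l: "l > 1" and uv: "u \<le> v"
        and nz: "\<And>x. u \<le> x \<Longrightarrow> x \<le> v \<Longrightarrow> sin \<beta> * a x + cos \<beta> * b x \<noteq> 0" for \<beta> l u v
    proof -
      define G where "G z = of_real (l * M) * exp (\<i> * of_real \<beta>) * Ea z - f z" for z
      have holG: "G holomorphic_on UNIV" unfolding G_def by (intro holomorphic_intros holEa holf)
      have lM: "l * M > 0" using l Mpos by simp
      have Glow: "norm (G z) \<ge> (l - 1) * M * norm (E z)" if "Im z \<ge> 0" for z
      proof -
        have "norm (of_real (l * M) * exp (\<i> * of_real \<beta>) * Ea z) = l * M * norm (E z)"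
          using l Mpos by (simp add: norm_mult nEa)
        then have "norm (G z) \<ge> l * M * norm (E z) - norm (f z)"
          unfolding G_def by (metis norm_triangle_ineq2)
        then show ?thesis using fbound[OF that] by (simp add: algebra_simps)
      qed
      have Gnz: "G z \<noteq> 0" if "Im z \<ge> 0" for z
      proof -
        have "(l - 1) * M * norm (E z) > 0" using l Mpos Enz[OF that] by simp
        then show ?thesis using Glow[OF that] by auto
      qed
      have hbG: "norm (G (cnj z)) \<le> norm (G z)" if zp: "Im z > 0" for z
      proof -
        define q where "q w = cnj (G (cnj w)) / G w" for w
        have openG: "open {w. G w \<noteq> 0}"
          by (rule open_Collect_neq) (auto intro: holomorphic_on_imp_continuous_on holG)
        have holq: "q holomorphic_on {w. G w \<noteq> 0}" unfolding q_def
          by (intro holomorphic_intros holomorphic_on_subset[OF sharp_holo[OF holG]] holomorphic_on_subset[OF holG]) auto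
        have subG: "{w. Im w \<ge> 0} \<subseteq> {w. G w \<noteq> 0}" using Gnz by auto
        have qC: "norm (q w) \<le> (l * M + K2) / ((l - 1) * M)" if wp: "Im w > 0" for w
        proof -
          have nEw: "norm (E w) > 0" using Enz[of w] wp by simp
          have "norm (f (cnj w)) = norm (sharp f w)" by (simp add: sharp_def)
          also have "\<dots> \<le> K2 * norm (E w)"
            using K2[OF wp] Enz[of w] wp by (simp add: norm_divide divide_le_eq)
          finally have fc: "norm (f (cnj w)) \<le> K2 * norm (E w)" .
          have "norm (G (cnj w)) \<le> norm (of_real (l * M) * exp (\<i> * of_real \<beta>) * Ea (cnj w)) + norm (f (cnj w))"
            unfolding G_def by (rule norm_triangle_ineq4)
          also have "norm (of_real (l * M) * exp (\<i> * of_real \<beta>) * Ea (cnj w)) = l * M * norm (E (cnj w))"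
            using l Mpos by (simp add: norm_mult nEa)
          finally have "norm (G (cnj w)) \<le> l * M * norm (E (cnj w)) + norm (f (cnj w))" .
          moreover have "l * M * norm (E (cnj w)) \<le> l * M * norm (E w)"
            using hbE[OF wp] lM by (intro mult_left_mono) auto
          ultimately have num: "norm (G (cnj w)) \<le> (l * M + K2) * norm (E w)"
            using fc by (simp add: algebra_simps)
          have den: "(l - 1) * M * norm (E w) \<le> norm (G w)" using Glow wp by simp
          have "norm (q w) = norm (G (cnj w)) / norm (G w)" unfolding q_def by (simp add: norm_divide)
          also have "\<dots> \<le> ((l * M + K2) * norm (E w)) / ((l - 1) * M * norm (E w))"
            using num den l Mpos nEw K2pos by (intro frac_le) auto
          also have "\<dots> = (l * M + K2) / ((l - 1) * M)" using nEw by simp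
          finally show ?thesis .
        qed
        have qR: "norm (q (of_real x)) \<le> 1" for x :: real
        proof -
          have "G (of_real x) \<noteq> 0" using Gnz[of "of_real x"] by simp
          then show ?thesis unfolding q_def by (simp add: norm_divide)
        qed
        have "norm (q z) \<le> 1" using PL_pos[OF holq openG subG qC qR, of z] zp by simp
        then show ?thesis using Gnz[of z] zp unfolding q_def by (simp add: norm_divide divide_le_eq)
      qed
      have ReG: "Re (G (of_real x)) = l * M * (cos \<beta> * a x - sin \<beta> * b x) - fr x" for x
        unfolding G_def a_def b_def fr_def by (simp add: Re_exp Im_exp algebra_simps)
      have ImG: "Im (G (of_real x)) = l * M * (sin \<beta> * a x + cos \<beta> * b x)" for x
        unfolding G_def a_def b_def by (simp add: Re_exp Im_exp fIm algebra_simps)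
      have "Re (G (of_real u)) / Im (G (of_real u)) \<le> Re (G (of_real v)) / Im (G (of_real v))"
      proof (rule ratio_mono[OF holG deriv_sign[OF holG hbG] uv])
        fix x assume "u \<le> x" "x \<le> v"
        then show "Im (G (of_real x)) \<noteq> 0" unfolding ImG using nz l Mpos by simp
      qed
      then show ?thesis unfolding ReG ImG .
    qed
    show ?thesis
    proof (intro allI impI, elim conjE)
      fix x assume x1: "b\<^sub>l \<le> x" and x2: "x \<le> b\<^sub>r"
      have "M * a x \<le> fr x"
      proof (cases "x \<le> \<xi>")
        case True
        show ?thesis
        proof (rule core_left[OF ca cb cf Mpos a\<xi>(1) b\<xi> f\<xi> bl(1) _ monoE monoG x1 True])
          fix t assume "b\<^sub>l < t" "t < \<xi>"
          then show "b t \<noteq> 0" using bl(3) bB by blast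
        qed (auto)
      next
        case False
        show ?thesis
        proof (rule core_right[OF ca cb cf Mpos a\<xi>(1) b\<xi> f\<xi> br(1) _ monoE monoG _ x2])
          fix t assume "\<xi> < t" "t < b\<^sub>r"
          then show "b t \<noteq> 0" using br(3) bB by blast
        qed (use False in auto)
      qed
      then show "Hinf_norm E f * Re (A_fun E \<alpha> (complex_of_real x)) \<le> Re (f (complex_of_real x))"
        unfolding A_real fr_def a_def M_def Ea_def by simp
    qed
  qed
qed

end
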